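(* Let $k$ be a positive integer. A graph $G$ is not b-$\chi$-$k$-bounded if and only if $G$ contains, as an induced subgraph, a minimal $\chi$-$k$-unbounded b-atom.
   Context: $\chi(G)$ denotes the chromatic number. A proper $k$-coloring of $G$ is a surjective map $c:V(G)\to\{1,\ldots,k\}$ with $c(u)\ne c(v)$ for every edge $uv$; a vertex of color $i$ is a b-vertex if it has a neighbor of every color $j\ne i$; a b-$k$-coloring is a proper $k$-coloring in which every color class contains a b-vertex; $\varphi(G)$ is the largest $k$ such that $G$ has a b-$k$-coloring. A b-$t$-atom is a graph $A$ whose vertex set can be partitioned into $t$ sets $D_1,\ldots,D_t$, each $D_i$ containing a special vertex $c_i$, such that each $D_i$ is independent with $|D_i|\le t$ and, for all $i\ne j$, $c_i$ has a neighbor in $D_j$. A graph $G$ is b-$\chi$-$k$-bounded if $\varphi(G')-\chi(G')\le k$ for every induced subgraph $G'$ of $G$. A graph $G$ is a $\chi$-$k$-unbounded b-atom if $\varphi(G)-\chi(G)>k$ and $G$ is a b-$t$-atom for some integer $t$; it is minimal if no proper induced subgraph of it is a $\chi$-$k$-unbounded b-atom. *)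

theory Defs
  imports Main
begin

text \<open>A graph is given by a vertex set V and a symmetric irreflexive edge relation E.
  Induced subgraphs are (V', E) with V' a subset of V.\<close>

definition proper_coloring :: "'a set \<Rightarrow> ('a \<Rightarrow> 'a \<Rightarrow> bool) \<Rightarrow> nat \<Rightarrow> ('a \<Rightarrow> nat) \<Rightarrow> bool" where
  "proper_coloring V E k c \<longleftrightarrow> c ` V = {1..k} \<and> (\<forall>u\<in>V. \<forall>v\<in>V. E u v \<longrightarrow> c u \<noteq> c v)"

definition chromatic_number :: "'a set \<Rightarrow> ('a \<Rightarrow> 'a \<Rightarrow> bool) \<Rightarrow> nat" where
  "chromatic_number V E = (LEAST k. \<exists>c. proper_coloring V E k c)"

definition b_vertex :: "'a set \<Rightarrow> ('a \<Rightarrow> 'a \<Rightarrow> bool) \<Rightarrow> nat \<Rightarrow> ('a \<Rightarrow> nat) \<Rightarrow> 'a \<Rightarrow> bool" where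
  "b_vertex V E k c v \<longleftrightarrow> (\<forall>j\<in>{1..k}. j \<noteq> c v \<longrightarrow> (\<exists>u\<in>V. E v u \<and> c u = j))"

definition b_coloring :: "'a set \<Rightarrow> ('a \<Rightarrow> 'a \<Rightarrow> bool) \<Rightarrow> nat \<Rightarrow> ('a \<Rightarrow> nat) \<Rightarrow> bool" where
  "b_coloring V E k c \<longleftrightarrow> proper_coloring V E k c \<and>
     (\<forall>i\<in>{1..k}. \<exists>v\<in>V. c v = i \<and> b_vertex V E k c v)"

definition b_chromatic_number :: "'a set \<Rightarrow> ('a \<Rightarrow> 'a \<Rightarrow> bool) \<Rightarrow> nat" where
  "b_chromatic_number V E = (GREATEST k. \<exists>c. b_coloring V E k c)"

definition b_atom :: "'a set \<Rightarrow> ('a \<Rightarrow> 'a \<Rightarrow> bool) \<Rightarrow> nat \<Rightarrow> bool" where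
  "b_atom V E t \<longleftrightarrow> (\<exists>(D :: nat \<Rightarrow> 'a set) (c :: nat \<Rightarrow> 'a).
     (\<Union>i\<in>{1..t}. D i) = V \<and>
     (\<forall>i\<in>{1..t}. \<forall>j\<in>{1..t}. i \<noteq> j \<longrightarrow> D i \<inter> D j = {}) \<and>
     (\<forall>i\<in>{1..t}. c i \<in> D i \<and> card (D i) \<le> t \<and>
        (\<forall>u\<in>D i. \<forall>v\<in>D i. \<not> E u v)) \<and>
     (\<forall>i\<in>{1..t}. \<forall>j\<in>{1..t}. i \<noteq> j \<longrightarrow> (\<exists>u\<in>D j. E (c i) u)))"

definition b_chi_bounded :: "nat \<Rightarrow> 'a set \<Rightarrow> ('a \<Rightarrow> 'a \<Rightarrow> bool) \<Rightarrow> bool" where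
  "b_chi_bounded k V E \<longleftrightarrow>
     (\<forall>V' \<subseteq> V. int (b_chromatic_number V' E) - int (chromatic_number V' E) \<le> int k)"

definition chi_unbounded_b_atom :: "nat \<Rightarrow> 'a set \<Rightarrow> ('a \<Rightarrow> 'a \<Rightarrow> bool) \<Rightarrow> bool" where
  "chi_unbounded_b_atom k V E \<longleftrightarrow>
     int (b_chromatic_number V E) - int (chromatic_number V E) > int k \<and> (\<exists>t. b_atom V E t)"

definition minimal_chi_unbounded_b_atom :: "nat \<Rightarrow> 'a set \<Rightarrow> ('a \<Rightarrow> 'a \<Rightarrow> bool) \<Rightarrow> bool" where
  "minimal_chi_unbounded_b_atom k V E \<longleftrightarrow>
     chi_unbounded_b_atom k V E \<and> (\<forall>V' \<subset> V. \<not> chi_unbounded_b_atom k V' E)"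

end

theory Submission
  imports Defs
begin

lemma recolor:
  assumes "finite V" and "\<forall>u\<in>V. \<forall>v\<in>V. E u v \<longrightarrow> c u \<noteq> (c v::nat)"
  shows "\<exists>c'. proper_coloring V E (card (c ` V)) c'"
proof -
  have "finite (c ` V)" using assms(1) by simp
  then obtain f where f: "bij_betw f (c ` V) {1..card (c ` V)}"
    by (metis card_atLeastAtMost diff_Suc_1 finite_atLeastAtMost finite_same_card_bij)
  have "proper_coloring V E (card (c ` V)) (f \<circ> c)"
    unfolding proper_coloring_def
  proof
    show "(f \<circ> c) ` V = {1..card (c ` V)}" using f by (simp add: bij_betw_def image_comp)
    show "\<forall>u\<in>V. \<forall>v\<in>V. E u v \<longrightarrow> (f \<circ> c) u \<noteq> (f \<circ> c) v"
      using f assms(2) unfolding bij_betw_def inj_on_def by auto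
  qed
  then show ?thesis by blast
qed

lemma proper_ex:
  assumes "finite V" and irr: "\<forall>u. \<not> E u u"
  shows "\<exists>k c. proper_coloring V E k c"
proof -
  obtain f where f: "bij_betw f V {1..card V}"
    by (metis assms card_atLeastAtMost diff_Suc_1 finite_atLeastAtMost finite_same_card_bij)
  then have "proper_coloring V E (card V) f"
    unfolding proper_coloring_def bij_betw_def inj_on_def using irr by metis
  then show ?thesis by blast
qed

lemma chi_I:
  assumes "finite V" "\<forall>u. \<not> E u u"
  shows "\<exists>c. proper_coloring V E (chromatic_number V E) c"
proof -
  obtain k c where "proper_coloring V E k c" using proper_ex[of V E, OF assms] by blast
  then show ?thesis unfolding chromatic_number_def by (rule LeastI_ex[of "\<lambda>k. \<exists>c. proper_coloring V E k c", OF exI[of _ k], OF exI])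
qed

lemma chi_le:
  assumes "proper_coloring V E m c"
  shows "chromatic_number V E \<le> m"
  using assms unfolding chromatic_number_def by (metis (mono_tags, lifting) Least_le)

lemma chi_mono:
  assumes "finite V" "V' \<subseteq> V" "\<forall>u. \<not> E u u"
  shows "chromatic_number V' E \<le> chromatic_number V E"
proof -
  obtain c where c: "proper_coloring V E (chromatic_number V E) c" using chi_I[of V E, OF assms(1) assms(3)] by blast
  have fin: "finite V'" using assms finite_subset by blast
  have "\<forall>u\<in>V'. \<forall>v\<in>V'. E u v \<longrightarrow> c u \<noteq> c v" using c assms(2) unfolding proper_coloring_def by blast
  then obtain c' where c': "proper_coloring V' E (card (c ` V')) c'" using recolor[OF fin] by blast
  have "card (c ` V') \<le> card (c ` V)" using card_mono[OF finite_imageI[OF assms(1)] image_mono[OF assms(2)]] .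
  also have "\<dots> = chromatic_number V E" using c unfolding proper_coloring_def by simp
  finally show ?thesis using chi_le[OF c'] by linarith
qed

lemma b_exists:
  assumes "finite V" and sym0: "\<forall>u v. E u v \<longrightarrow> E v u" and irr: "\<forall>u. \<not> E u u"
  shows "\<exists>c. b_coloring V E (chromatic_number V E) c"
proof (rule ccontr)
  assume nb: "\<not> ?thesis"
  have sym: "E v u" if "E u v" for u v using sym0 that by blast
  define m where "m = chromatic_number V E"
  obtain c where c: "proper_coloring V E m c" using chi_I[of V E, OF assms(1) irr] m_def by blast
  then obtain i where i: "i \<in> {1..m}" and nob: "\<forall>v\<in>V. c v = i \<longrightarrow> \<not> b_vertex V E m c v"
    using nb m_def unfolding b_coloring_def by blast
  have ex: "\<exists>j\<in>{1..m}. j \<noteq> i \<and> \<not> (\<exists>u\<in>V. E v u \<and> c u = j)" if "v \<in> V" "c v = i" for v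
    using nob that c unfolding b_vertex_def by blast
  define g where "g v = (SOME j. j\<in>{1..m} \<and> j \<noteq> i \<and> \<not> (\<exists>u\<in>V. E v u \<and> c u = j))" for v
  have g: "g v\<in>{1..m} \<and> g v \<noteq> i \<and> \<not> (\<exists>u\<in>V. E v u \<and> c u = g v)" if "v \<in> V" "c v = i" for v
    unfolding g_def by (rule someI_ex) (use ex[OF that] in blast)
  define c' where "c' v = (if c v = i then g v else c v)" for v
  have cV: "c v \<in> {1..m}" if "v \<in> V" for v using c that unfolding proper_coloring_def by blast
  have pr: "\<forall>u\<in>V. \<forall>v\<in>V. E u v \<longrightarrow> c' u \<noteq> c' v"
  proof (intro ballI impI)
    fix u v assume uv: "u \<in> V" "v \<in> V" "E u v"
    have cuv: "c u \<noteq> c v" using c uv unfolding proper_coloring_def by blast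
    show "c' u \<noteq> c' v"
    proof (cases "c u = i")
      case True
      then show ?thesis using cuv g[OF uv(1) True] uv unfolding c'_def by auto
    next
      case False
      show ?thesis
      proof (cases "c v = i")
        case True
        then show ?thesis using False g[OF uv(2) True] uv sym[OF uv(3)] unfolding c'_def by auto
      next
        case False
        then show ?thesis using \<open>c u \<noteq> i\<close> cuv unfolding c'_def by auto
      qed
    qed
  qed
  have sub: "c' ` V \<subseteq> {1..m} - {i}" using g cV unfolding c'_def by auto
  have "card (c' ` V) \<le> card ({1..m} - {i})" using sub by (simp add: card_mono)
  also have "\<dots> = m - 1" using i by simp
  finally have le: "card (c' ` V) \<le> m - 1" .
  obtain c'' where "proper_coloring V E (card (c' ` V)) c''" using recolor[OF assms(1) pr] by blast
  then have "m \<le> card (c' ` V)" using chi_le m_def by blast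
  with le i show False by auto
qed

lemma b_le_card:
  assumes "finite V" "b_coloring V E k c"
  shows "k \<le> card V"
proof -
  have "c ` V = {1..k}" using assms unfolding b_coloring_def proper_coloring_def by blast
  then have "card (c ` V) = k" by simp
  then show ?thesis using card_image_le[OF assms(1), of c] by simp
qed

lemma phi_I:
  assumes "finite V" and "\<forall>u v. E u v \<longrightarrow> E v u" "\<forall>u. \<not> E u u"
  shows "\<exists>c. b_coloring V E (b_chromatic_number V E) c"
  unfolding b_chromatic_number_def
  apply (rule GreatestI_nat[where b="card V"])
  using b_exists[of V E, OF assms] b_le_card[OF assms(1)] by blast+

lemma phi_ge:
  assumes "finite V" "b_coloring V E k c"
  shows "k \<le> b_chromatic_number V E"
  unfolding b_chromatic_number_def
  apply (rule Greatest_le_nat[where b="card V"])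
  using assms b_le_card[OF assms(1)] by blast+

theorem mainTheorem16:
  fixes V :: "'a set" and E :: "'a \<Rightarrow> 'a \<Rightarrow> bool" and k :: nat
  assumes "k > 0"
    and "finite V"
    and "\<And>u v. E u v \<Longrightarrow> E v u"
    and "\<And>u. \<not> E u u"
  shows "\<not> b_chi_bounded k V E \<longleftrightarrow> (\<exists>V' \<subseteq> V. minimal_chi_unbounded_b_atom k V' E)"
proof
  assume "\<exists>V' \<subseteq> V. minimal_chi_unbounded_b_atom k V' E"
  then show "\<not> b_chi_bounded k V E"
    unfolding minimal_chi_unbounded_b_atom_def chi_unbounded_b_atom_def b_chi_bounded_def by force
next
  assume "\<not> b_chi_bounded k V E"
  then obtain V' where V': "V' \<subseteq> V" and gap: "int (b_chromatic_number V' E) - int (chromatic_number V' E) > int k"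
    unfolding b_chi_bounded_def by force
  have finV': "finite V'" using V' assms(2) finite_subset by blast
  define t where "t = b_chromatic_number V' E"
  have symE: "\<forall>u v. E u v \<longrightarrow> E v u" using assms(3) by blast
  have irrE: "\<forall>u. \<not> E u u" using assms(4) by blast
  obtain c where c: "b_coloring V' E t c" using phi_I[of V' E, OF finV' symE irrE] t_def by blast
  have cimg: "c ` V' = {1..t}" and cpr: "\<forall>u\<in>V'. \<forall>v\<in>V'. E u v \<longrightarrow> c u \<noteq> c v"
    using c unfolding b_coloring_def proper_coloring_def by auto
  have exx: "\<exists>v\<in>V'. c v = i \<and> b_vertex V' E t c v" if "i \<in> {1..t}" for i
    using c that unfolding b_coloring_def by blast
  define x where "x i = (SOME v. v\<in>V' \<and> c v = i \<and> b_vertex V' E t c v)" for i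
  have x: "x i \<in> V' \<and> c (x i) = i \<and> b_vertex V' E t c (x i)" if "i \<in> {1..t}" for i
    unfolding x_def by (rule someI_ex) (use exx[OF that] in blast)
  have exw: "\<exists>u\<in>V'. E (x i) u \<and> c u = j" if "i \<in> {1..t}" "j \<in> {1..t}" "i \<noteq> j" for i j
    using x[OF that(1)] that unfolding b_vertex_def by auto
  define w where "w i j = (SOME u. u\<in>V' \<and> E (x i) u \<and> c u = j)" for i j
  have w: "w i j \<in> V' \<and> E (x i) (w i j) \<and> c (w i j) = j" if "i \<in> {1..t}" "j \<in> {1..t}" "i \<noteq> j" for i j
    unfolding w_def by (rule someI_ex) (use exw[OF that] in blast)
  define A where "A = x ` {1..t} \<union> {w i j | i j. i \<in> {1..t} \<and> j \<in> {1..t} \<and> i \<noteq> j}"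
  have AV': "A \<subseteq> V'" unfolding A_def using x w by blast
  have finA: "finite A" using AV' finV' finite_subset by blast
  have cA: "c a \<in> {1..t}" if "a \<in> A" for a using AV' that cimg by blast
  define D where "D j = {a\<in>A. c a = j}" for j
  have atom: "b_atom A E t"
    unfolding b_atom_def
  proof (intro exI[of _ D] exI[of _ x] conjI ballI impI)
    show "(\<Union>i\<in>{1..t}. D i) = A" unfolding D_def using cA by auto
  next
    fix i j assume "i \<in> {1..t}" "j \<in> {1..t}" "i \<noteq> j"
    then show "D i \<inter> D j = {}" unfolding D_def by auto
  next
    fix i assume i: "i \<in> {1..t}"
    show "x i \<in> D i" unfolding D_def A_def using x[OF i] i by auto
    have "D i \<subseteq> insert (x i) ((\<lambda>j. w j i) ` ({1..t} - {i}))"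
    proof
      fix a assume a: "a \<in> D i"
      then have "a \<in> A" "c a = i" unfolding D_def by auto
      then show "a \<in> insert (x i) ((\<lambda>j. w j i) ` ({1..t} - {i}))"
        unfolding A_def using x w by fastforce
    qed
    then have "card (D i) \<le> card (insert (x i) ((\<lambda>j. w j i) ` ({1..t} - {i})))"
      by (simp add: card_mono)
    also have "\<dots> \<le> Suc (card ((\<lambda>j. w j i) ` ({1..t} - {i})))" by (simp add: card_insert_le_m1)
    also have "\<dots> \<le> Suc (card ({1..t} - {i}))" using card_image_le by (simp add: card_image_le)
    also have "\<dots> = t" using i by simp
    finally show "card (D i) \<le> t" .
    show "\<not> E u v" if "u \<in> D i" "v \<in> D i" for u v using that cpr AV' unfolding D_def by (smt (verit) mem_Collect_eq subsetD)
  next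
    fix i j assume ij: "i \<in> {1..t}" "j \<in> {1..t}" "i \<noteq> j"
    have "w i j \<in> D j" unfolding D_def A_def using w[OF ij] ij by blast
    then show "\<exists>u\<in>D j. E (x i) u" using w[OF ij] by blast
  qed
  have bA: "b_coloring A E t c"
    unfolding b_coloring_def proper_coloring_def
  proof (intro conjI ballI impI)
    show "c ` A = {1..t}"
    proof
      show "c ` A \<subseteq> {1..t}" using cA by blast
      show "{1..t} \<subseteq> c ` A" unfolding A_def using x by force
    qed
  next
    fix u v assume "u \<in> A" "v \<in> A" "E u v" then show "c u \<noteq> c v" using cpr AV' by blast
  next
    fix i assume i: "i \<in> {1..t}"
    have "x i \<in> A" unfolding A_def using i by blast
    moreover have "b_vertex A E t c (x i)"
      unfolding b_vertex_def
    proof (intro ballI impI)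
      fix j assume j: "j \<in> {1..t}" "j \<noteq> c (x i)"
      then have ij: "i \<noteq> j" using x[OF i] by simp
      have "w i j \<in> A" unfolding A_def using i j ij by blast
      then show "\<exists>u\<in>A. E (x i) u \<and> c u = j" using w[OF i j(1) ij] by blast
    qed
    ultimately show "\<exists>v\<in>A. c v = i \<and> b_vertex A E t c v" using x[OF i] by blast
  qed
  have "t \<le> b_chromatic_number A E" using phi_ge[OF finA bA] .
  moreover have "chromatic_number A E \<le> chromatic_number V' E" using chi_mono[of V' A E, OF finV' AV' irrE] .
  ultimately have cuA: "chi_unbounded_b_atom k A E"
    unfolding chi_unbounded_b_atom_def using atom gap t_def by auto
  define P where "P n \<longleftrightarrow> (\<exists>B\<subseteq>A. card B = n \<and> chi_unbounded_b_atom k B E)" for n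
  have "P (card A)" unfolding P_def using cuA by blast
  then have "P (LEAST n. P n)" by (rule LeastI)
  then obtain B where B: "B \<subseteq> A" "card B = (LEAST n. P n)" "chi_unbounded_b_atom k B E"
    unfolding P_def by blast
  have "minimal_chi_unbounded_b_atom k B E"
    unfolding minimal_chi_unbounded_b_atom_def
  proof (intro conjI allI impI)
    show "chi_unbounded_b_atom k B E" by fact
    fix B' assume B': "B' \<subset> B"
    have "finite B" using B(1) finA finite_subset by blast
    then have "card B' < card B" using B' psubset_card_mono by blast
    show "\<not> chi_unbounded_b_atom k B' E"
    proof
      assume "chi_unbounded_b_atom k B' E"
      then have "P (card B')" unfolding P_def using B' B(1) by blast
      then have "(LEAST n. P n) \<le> card B'" by (rule Least_le)
      with \<open>card B' < card B\<close> B(2) show False by simp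
    qed
  qed
  moreover have "B \<subseteq> V" using B(1) AV' V' by blast
  ultimately show "\<exists>V' \<subseteq> V. minimal_chi_unbounded_b_atom k V' E" by blast
qed

end
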